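(* Let $g:S^1\to X$ be a continuous surjection onto a Peano continuum $X$. The following are equivalent: (a) $g$ is arcwise increasing; (b) $g$ is hereditarily irreducible; (c) $g$ is strongly irreducible; (d) $g$ is almost injective; (e) $g$ is irreducible. If moreover $X$ is a Peano graph, these are also equivalent to: (f) $g$ is edge-wise Eulerian and $g^{-1}(\operatorname{Gr}(X))$ is zero-dimensional.
   Context: For a continuous map $g:X\to Y$ between continua: $g$ is almost injective if $\{x: g^{-1}(g(x))=\{x\}\}$ is dense in $X$; irreducible if $g(K)\subsetneq g(X)$ for every proper subcontinuum $K\subsetneq X$; hereditarily irreducible if $g(A)\subsetneq g(B)$ for all subcontinua $A\subsetneq B$; strongly irreducible if $g(A)\subsetneq g(X)$ for every closed $A\subsetneq X$; arcwise increasing if $g(A)\subsetneq g(B)$ for all arcs $A\subsetneq B$. A Peano continuum is a compact connected locally connected metrizable space; a free arc (edge) is an inclusion-maximal open subset homeomorphic to $(0,1)$; $\operatorname{Gr}(X)$ is $X$ minus the union of all edges; a Peano graph is a Peano continuum in which the union of edges is dense. A continuous surjection $g:S^1\to X$ is edge-wise Eulerian if $g^{-1}(x)$ is a singleton for every $x$ lying in an edge. *)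

theory Defs
  imports "HOL-Analysis.Analysis"
begin

definition circle :: "complex set" where
  "circle = sphere 0 1"

definition continuum :: "'a::metric_space set \<Rightarrow> bool" where
  "continuum K \<longleftrightarrow> K \<noteq> {} \<and> compact K \<and> connected K"

definition peano_continuum :: "'a::metric_space set \<Rightarrow> bool" where
  "peano_continuum X \<longleftrightarrow> continuum X \<and> locally connected X"

definition arc_set :: "'a::topological_space set \<Rightarrow> bool" where
  "arc_set A \<longleftrightarrow> A homeomorphic {0..1::real}"

definition almost_injective :: "'a::topological_space set \<Rightarrow> ('a \<Rightarrow> 'b) \<Rightarrow> bool" where
  "almost_injective S g \<longleftrightarrow> S \<subseteq> closure {x \<in> S. {y \<in> S. g y = g x} = {x}}"

definition irreducible_map :: "'a::metric_space set \<Rightarrow> ('a \<Rightarrow> 'b) \<Rightarrow> bool" where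
  "irreducible_map S g \<longleftrightarrow>
     (\<forall>K. K \<subseteq> S \<and> continuum K \<and> K \<noteq> S \<longrightarrow> g ` K \<subset> g ` S)"

definition hereditarily_irreducible :: "'a::metric_space set \<Rightarrow> ('a \<Rightarrow> 'b) \<Rightarrow> bool" where
  "hereditarily_irreducible S g \<longleftrightarrow>
     (\<forall>A B. B \<subseteq> S \<and> continuum A \<and> continuum B \<and> A \<subset> B \<longrightarrow> g ` A \<subset> g ` B)"

definition strongly_irreducible :: "'a::metric_space set \<Rightarrow> ('a \<Rightarrow> 'b) \<Rightarrow> bool" where
  "strongly_irreducible S g \<longleftrightarrow>
     (\<forall>A. closedin (top_of_set S) A \<and> A \<subset> S \<longrightarrow> g ` A \<subset> g ` S)"

definition arcwise_increasing :: "'a::metric_space set \<Rightarrow> ('a \<Rightarrow> 'b) \<Rightarrow> bool" where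
  "arcwise_increasing S g \<longleftrightarrow>
     (\<forall>A B. B \<subseteq> S \<and> arc_set A \<and> arc_set B \<and> A \<subset> B \<longrightarrow> g ` A \<subset> g ` B)"

definition edge :: "'a::metric_space set \<Rightarrow> 'a set \<Rightarrow> bool" where
  "edge X E \<longleftrightarrow> openin (top_of_set X) E \<and> E homeomorphic {0<..<1::real} \<and>
     (\<forall>F. openin (top_of_set X) F \<and> F homeomorphic {0<..<1::real} \<and> E \<subseteq> F \<longrightarrow> F = E)"

definition edge_union :: "'a::metric_space set \<Rightarrow> 'a set" where
  "edge_union X = \<Union>{E. edge X E}"

definition Gr :: "'a::metric_space set \<Rightarrow> 'a set" where
  "Gr X = X - edge_union X"

definition peano_graph :: "'a::metric_space set \<Rightarrow> bool" where
  "peano_graph X \<longleftrightarrow> peano_continuum X \<and> X \<subseteq> closure (edge_union X)"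

definition edgewise_eulerian :: "'a::metric_space set \<Rightarrow> 'b::metric_space set \<Rightarrow> ('a \<Rightarrow> 'b) \<Rightarrow> bool" where
  "edgewise_eulerian S X g \<longleftrightarrow>
     (\<forall>x \<in> edge_union X. \<exists>t. {s \<in> S. g s = x} = {t})"

text \<open>Zero-dimensional (small inductive dimension at most 0): every point has arbitrarily
  small relatively clopen neighbourhoods.\<close>
definition zero_dimensional :: "'a::metric_space set \<Rightarrow> bool" where
  "zero_dimensional A \<longleftrightarrow>
     (\<forall>x \<in> A. \<forall>U. open U \<and> x \<in> U \<longrightarrow>
        (\<exists>V. openin (top_of_set A) V \<and> closedin (top_of_set A) V \<and> x \<in> V \<and> V \<subseteq> U))"

end

theory Submission imports Defs begin

lemma cis_in_circle[simp]: "cis x \<in> circle"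
  by (simp add: circle_def)

lemma cis_shift_int: "cis (x + 2*pi*real_of_int n) = cis x"
proof -
  have "cis (2*pi*real_of_int n) = 1" by (rule cis_multiple_2pi) simp
  then show ?thesis by (metis cis_mult mult_1_right)
qed

lemma cis_shift: "cis (x + 2*pi) = cis x"
  using cis_shift_int[of x 1] by simp

lemma cis_inj: assumes "cis x = cis y" "\<bar>x - y\<bar> < 2*pi" shows "x = y"
proof -
  have "exp (\<i> * complex_of_real x) = exp (\<i> * complex_of_real y)"
    using assms(1) by (simp add: cis_conv_exp)
  then have "\<i> * complex_of_real x = \<i> * complex_of_real y"
    by (rule exp_complex_eqI[rotated]) (use assms(2) in simp)
  then show ?thesis by simp
qed

lemma circle_cover: assumes "z \<in> circle" shows "\<exists>\<phi>. a \<le> \<phi> \<and> \<phi> < a + 2*pi \<and> z = cis \<phi>"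
proof -
  have "norm z = 1" using assms by (simp add: circle_def)
  then have "sgn z = z" "z \<noteq> 0" by (auto simp: sgn_div_norm)
  then have z: "z = cis (Arg z)" by (simp add: cis_Arg)
  define k where "k = floor ((Arg z - a) / (2*pi))"
  define \<phi> where "\<phi> = Arg z + 2*pi*real_of_int (-k)"
  have "real_of_int k \<le> (Arg z - a) / (2*pi)" "(Arg z - a) / (2*pi) < real_of_int k + 1"
    unfolding k_def by linarith+
  then have "2*pi*real_of_int k \<le> Arg z - a" "Arg z - a < 2*pi*(real_of_int k + 1)"
    using pi_gt_zero by (simp_all add: field_simps)
  then have "a \<le> \<phi> \<and> \<phi> < a + 2*pi" unfolding \<phi>_def by (simp add: algebra_simps)
  moreover have "z = cis \<phi>" unfolding \<phi>_def using z cis_shift_int by metis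
  ultimately show ?thesis by blast
qed


lemma cont_cis: "continuous_on A cis"
  using continuous_on_cis[OF continuous_on_id[of A]] by simp

lemma img_sub: "A \<subseteq> B \<Longrightarrow> cis ` B \<subseteq> U \<Longrightarrow> cis ` A \<subseteq> U"
  by blast

lemma seg_img: "(\<And>\<tau>. \<tau> \<in> T \<Longrightarrow> e + \<tau>*(\<phi>-e) \<in> I) \<Longrightarrow> (\<lambda>\<tau>. cis (e + \<tau>*(\<phi>-e))) ` T \<subseteq> cis ` I"
  by blast

lemma arc_disj: assumes "a < x" "x < b" "b \<le> y" "y \<le> a + 2*pi" shows "cis x \<noteq> cis y"
proof
  assume "cis x = cis y"
  moreover have "\<bar>x - y\<bar> < 2*pi" using assms by auto
  ultimately have "x = y" by (rule cis_inj)
  then show False using assms by auto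
qed

lemma arc_disj_set: assumes "b \<le> a + 2*pi" shows "cis ` {a<..<b} \<inter> cis ` {b..a+2*pi} = {}"
  using arc_disj[of a _ b _] assms by fastforce

lemma arc_cover: assumes "a < b" "b \<le> a + 2*pi"
  shows "circle \<subseteq> cis ` {a<..<b} \<union> cis ` {b..a+2*pi}"
proof
  fix z assume "z \<in> circle"
  then obtain \<phi> where p: "a \<le> \<phi>" "\<phi> < a + 2*pi" "z = cis \<phi>" using circle_cover by blast
  show "z \<in> cis ` {a<..<b} \<union> cis ` {b..a+2*pi}"
  proof (cases "\<phi> = a")
    case True
    then have "z = cis (a + 2*pi)" using p cis_shift by simp
    then show ?thesis using assms by auto
  next
    case False
    then show ?thesis using p by (cases "\<phi> < b") auto
  qed
qed

lemma arc_complement: assumes "a < b" "b \<le> a + 2*pi"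
  shows "circle - cis ` {a<..<b} = cis ` {b..a+2*pi}"
  using arc_cover[OF assms] arc_disj_set[OF assms(2)] by (auto simp: circle_def)

lemma arc_compact: "compact (cis ` {c..d})"
  by (intro compact_continuous_image continuous_intros) auto

lemma arc_open: assumes "a < b" "b \<le> a + 2*pi"
  shows "openin (top_of_set circle) (cis ` {a<..<b})"
proof -
  have "cis ` {a<..<b} = circle \<inter> (- cis ` {b..a+2*pi})"
    using arc_complement[OF assms] by (auto simp: circle_def)
  moreover have "open (- cis ` {b..a+2*pi})"
    using arc_compact compact_imp_closed by blast
  ultimately show ?thesis by auto
qed

lemma arc_continuum: assumes "c \<le> d" shows "continuum (cis ` {c..d})"
  unfolding continuum_def using assms
  by (auto intro!: connected_continuous_image continuous_intros arc_compact)

lemma arc_set_cis: assumes "c < d" "d - c < 2*pi" shows "arc_set (cis ` {c..d})"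
proof -
  have "inj_on cis {c..d}"
    by (rule inj_onI, rule cis_inj) (use assms in auto)
  then obtain h where "homeomorphism {c..d} (cis ` {c..d}) cis h"
    using homeomorphism_compact[of "{c..d}" cis, OF _ cont_cis] by auto
  then have "cis ` {c..d} homeomorphic {c..d}"
    using homeomorphic_def homeomorphic_sym by blast
  moreover have "{c..d} homeomorphic {0..1::real}"
    using assms by (intro homeomorphic_closed_intervals_real) auto
  ultimately show ?thesis unfolding arc_set_def using homeomorphic_trans by blast
qed

lemma cis_nbhd: assumes "open U" "cis \<theta> \<in> U"
  shows "\<exists>\<delta>>0. \<delta> \<le> 1 \<and> cis ` {\<theta>-\<delta>..\<theta>+\<delta>} \<subseteq> U"
proof -
  have "open (cis -` U)"
    using continuous_on_open_vimage[OF open_UNIV] cont_cis assms(1) by auto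
  then obtain e where e: "e > 0" "ball \<theta> e \<subseteq> cis -` U" using assms(2) open_contains_ball by blast
  define \<delta> where "\<delta> = min (e/2) 1"
  have "{\<theta>-\<delta>..\<theta>+\<delta>} \<subseteq> ball \<theta> e" using e by (auto simp: \<delta>_def dist_real_def)
  then show ?thesis using e by (intro exI[of _ \<delta>]) (auto simp: \<delta>_def)
qed


definition injpts :: "(complex \<Rightarrow> 'a) \<Rightarrow> complex set" where
  "injpts g = {x \<in> circle. {y \<in> circle. g y = g x} = {x}}"

lemma injptsD: "t \<in> injpts g \<Longrightarrow> y \<in> circle \<Longrightarrow> g y = g t \<Longrightarrow> y = t"
  by (auto simp: injpts_def)

lemma dense_open_meets:
  assumes "circle \<subseteq> closure D" "D \<subseteq> circle" "openin (top_of_set circle) W" "W \<noteq> {}"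
  shows "\<exists>t. t \<in> W \<and> t \<in> D"
proof -
  obtain T where T: "open T" "W = circle \<inter> T" using assms(3) openin_open by blast
  then obtain w where "w \<in> circle" "w \<in> T" using assms(4) by auto
  then have "T \<inter> closure D \<noteq> {}" using assms(1) by auto
  then have "T \<inter> D \<noteq> {}" using open_Int_closure_eq_empty[OF T(1)] by blast
  then show ?thesis using T assms(2) by auto
qed

lemma ai_dense: "almost_injective circle g \<Longrightarrow> circle \<subseteq> closure (injpts g)"
  by (simp add: almost_injective_def injpts_def)

lemma continuum_closedin: assumes "continuum K" shows "closedin (top_of_set circle) (circle \<inter> K)"
proof -
  have "closed K" using assms compact_imp_closed unfolding continuum_def by blast
  then show ?thesis by (rule closedin_closed_Int)
qed

lemma c_e: assumes si: "strongly_irreducible circle g" shows "irreducible_map circle g"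
  unfolding irreducible_map_def
proof (intro allI impI)
  fix K assume K: "K \<subseteq> circle \<and> continuum K \<and> K \<noteq> circle"
  have "closedin (top_of_set circle) (circle \<inter> K)" using K continuum_closedin by simp
  moreover have "circle \<inter> K = K" using K by blast
  ultimately have cK: "closedin (top_of_set circle) K" by simp
  have pK: "K \<subset> circle" using K by blast
  show "g ` K \<subset> g ` circle" using si cK pK unfolding strongly_irreducible_def by simp
qed

lemma d_c: assumes "almost_injective circle g" shows "strongly_irreducible circle g"
  unfolding strongly_irreducible_def
proof (intro allI impI)
  fix A assume A: "closedin (top_of_set circle) A \<and> A \<subset> circle"
  have Ac: "closedin (top_of_set circle) A" and Asub: "A \<subseteq> circle" and Ane: "A \<noteq> circle"
    using A by auto
  obtain T where T: "closed T" "A = circle \<inter> T" using Ac closedin_closed by metis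
  have eq: "circle - A = circle \<inter> (- T)" using T by blast
  have "openin (top_of_set circle) (circle \<inter> (- T))"
    using T(1) by (intro openin_open_Int open_Compl)
  then have o: "openin (top_of_set circle) (circle - A)" unfolding eq .
  have ne: "circle - A \<noteq> {}" using Asub Ane by blast
  have Dsub: "injpts g \<subseteq> circle" unfolding injpts_def by blast
  obtain t where t: "t \<in> circle - A" "t \<in> injpts g"
    using dense_open_meets[OF ai_dense[OF assms] Dsub o ne] by blast
  have "g t \<notin> g ` A"
  proof
    assume "g t \<in> g ` A"
    then obtain a where a: "a \<in> A" "g t = g a" by (rule imageE)
    have ac: "a \<in> circle" using Asub a(1) by (rule subsetD)
    have "a = t" by (rule injptsD[OF t(2) ac a(2)[symmetric]])
    then show False using t a(1) by blast
  qed
  moreover have "g t \<in> g ` circle" using t(1) by blast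
  moreover have "g ` A \<subseteq> g ` circle" using Asub by (rule image_mono)
  ultimately show "g ` A \<subset> g ` circle" by blast
qed

lemma arc_continuum_set: "arc_set A \<Longrightarrow> continuum A"
  unfolding arc_set_def continuum_def
proof (intro conjI)
  assume h: "A homeomorphic {0..1::real}"
  show "compact A" using homeomorphic_compactness[OF h] by simp
  show "connected A" using homeomorphic_connectedness[OF h] by simp
  show "A \<noteq> {}"
  proof
    assume "A = {}"
    then have "{} homeomorphic {0..1::real}" using h by simp
    then show False by simp
  qed
qed

lemma b_a: assumes hi: "hereditarily_irreducible circle g" shows "arcwise_increasing circle g"
  unfolding arcwise_increasing_def
proof (intro allI impI)
  fix A B assume H: "B \<subseteq> circle \<and> arc_set A \<and> arc_set B \<and> A \<subset> B"
  have cA: "continuum A" using H by (intro arc_continuum_set) simp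
  have cB: "continuum B" using H by (intro arc_continuum_set) simp
  have "\<forall>A B. B \<subseteq> circle \<and> continuum A \<and> continuum B \<and> A \<subset> B \<longrightarrow> g ` A \<subset> g ` B"
    using hi unfolding hereditarily_irreducible_def .
  then show "g ` A \<subset> g ` B" using H cA cB by simp
qed

lemma a_e: assumes ai: "arcwise_increasing circle g" shows "irreducible_map circle g"
  unfolding irreducible_map_def
proof (intro allI impI)
  fix K assume K: "K \<subseteq> circle \<and> continuum K \<and> K \<noteq> circle"
  have KS: "K \<subseteq> circle" and cK: "continuum K" and KnS: "K \<noteq> circle" using K by simp_all
  show "g ` K \<subset> g ` circle"
  proof (rule ccontr)
    assume "\<not> g ` K \<subset> g ` circle"
    moreover have "g ` K \<subseteq> g ` circle" using KS by (rule image_mono)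
    ultimately have gK: "g ` circle \<subseteq> g ` K" by blast
    obtain p where p: "p \<in> circle" "p \<notin> K" using KS KnS by blast
    then obtain \<theta> where p\<theta>: "p = cis \<theta>" using circle_cover by blast
    have "closed K" using cK by (simp add: continuum_def compact_imp_closed)
    then have "open (- K)" by (rule open_Compl)
    then obtain \<delta> where d: "\<delta> > 0" "\<delta> \<le> 1" "cis ` {\<theta>-\<delta>..\<theta>+\<delta>} \<subseteq> - K"
      using cis_nbhd[of "- K" \<theta>] p\<theta> p(2) by auto
    have pi: "pi > 3" by (rule pi_gt3)
    define A where "A = cis ` {\<theta>+\<delta>..\<theta>-\<delta>+2*pi}"
    define B where "B = cis ` {\<theta>+\<delta>/2..\<theta>-\<delta>/2+2*pi}"
    have aA: "arc_set A" unfolding A_def using d pi by (intro arc_set_cis) auto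
    have aB: "arc_set B" unfolding B_def using d pi by (intro arc_set_cis) auto
    have AB: "A \<subseteq> B" unfolding A_def B_def using d by (intro image_mono) auto
    have inB: "cis (\<theta> + 3*\<delta>/4) \<in> B" unfolding B_def using d pi by auto
    have ninA: "cis (\<theta> + 3*\<delta>/4) \<notin> A"
    proof
      assume "cis (\<theta> + 3*\<delta>/4) \<in> A"
      then obtain y where y: "y \<in> {\<theta>+\<delta>..\<theta>-\<delta>+2*pi}" "cis (\<theta> + 3*\<delta>/4) = cis y"
        unfolding A_def by (rule imageE)
      have "cis (\<theta> + 3*\<delta>/4) \<noteq> cis y"
        by (rule arc_disj[of "\<theta>-\<delta>" _ "\<theta>+\<delta>"]) (use y d in auto)
      then show False using y(2) by simp
    qed
    have AB': "A \<subset> B" using AB inB ninA by blast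
    have KA: "K \<subseteq> A"
    proof
      fix k assume kK: "k \<in> K"
      then have "k \<in> circle" using KS by blast
      then have k: "k \<in> cis ` {\<theta>-\<delta><..<\<theta>+\<delta>} \<union> cis ` {\<theta>+\<delta>..\<theta>-\<delta>+2*pi}"
        using arc_cover[of "\<theta>-\<delta>" "\<theta>+\<delta>"] d pi by auto
      have "cis ` {\<theta>-\<delta><..<\<theta>+\<delta>} \<subseteq> - K" by (rule img_sub[OF _ d(3)]) auto
      then have "k \<notin> cis ` {\<theta>-\<delta><..<\<theta>+\<delta>}" using kK by blast
      then show "k \<in> A" using k unfolding A_def by blast
    qed
    have BS: "B \<subseteq> circle" unfolding B_def by auto
    have "g ` B \<subseteq> g ` A"
    proof -
      have "g ` B \<subseteq> g ` circle" using BS by (rule image_mono)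
      also have "\<dots> \<subseteq> g ` K" by (rule gK)
      also have "\<dots> \<subseteq> g ` A" using KA by (rule image_mono)
      finally show ?thesis .
    qed
    moreover have all: "\<forall>A B. B \<subseteq> circle \<and> arc_set A \<and> arc_set B \<and> A \<subset> B \<longrightarrow> g ` A \<subset> g ` B"
      using ai unfolding arcwise_increasing_def .
    then have "g ` A \<subset> g ` B" using BS aA aB AB' by simp
    ultimately show False by blast
  qed
qed


lemma d_b: assumes "almost_injective circle g" shows "hereditarily_irreducible circle g"
  unfolding hereditarily_irreducible_def
proof (intro allI impI)
  fix A B assume H: "B \<subseteq> circle \<and> continuum A \<and> continuum B \<and> A \<subset> B"
  have dense: "circle \<subseteq> closure (injpts g)" by (rule ai_dense[OF assms])
  have Dsub: "injpts g \<subseteq> circle" by (auto simp: injpts_def)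
  obtain b where b: "b \<in> B" "b \<notin> A" using H by auto
  then have "b \<in> circle" using H by auto
  then obtain \<beta> where "b = cis \<beta>" using circle_cover by blast
  have "open (- A)" using H by (auto simp: continuum_def compact_imp_closed)
  then obtain \<delta> where d: "\<delta> > 0" "\<delta> \<le> 1" "cis ` {\<beta>-\<delta>..\<beta>+\<delta>} \<subseteq> - A"
    using cis_nbhd \<open>b = cis \<beta>\<close> b by blast
  have pi: "pi > 3" by (rule pi_gt3)
  have found: "g ` A \<subset> g ` B" if W: "W \<subseteq> B" "W \<subseteq> - A" "openin (top_of_set circle) W" "W \<noteq> {}" for W
  proof -
    obtain t where t: "t \<in> W" "t \<in> injpts g" using dense_open_meets[OF dense Dsub W(3,4)] by blast
    have "g t \<notin> g ` A"
    proof
      assume "g t \<in> g ` A"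
      then obtain a where "a \<in> A" "g a = g t" by auto
      then have "a = t" using injptsD[OF t(2)] H by auto
      then show False using t W \<open>a \<in> A\<close> by auto
    qed
    then show ?thesis using t W H by auto
  qed
  show "g ` A \<subset> g ` B"
  proof (cases "cis ` {\<beta><..<\<beta>+\<delta>} \<subseteq> B")
    case True
    show ?thesis
    proof (rule found[OF True])
      show "cis ` {\<beta><..<\<beta>+\<delta>} \<subseteq> - A" by (rule img_sub[OF _ d(3)]) auto
      show "openin (top_of_set circle) (cis ` {\<beta><..<\<beta>+\<delta>})" using d pi by (intro arc_open) auto
      show "cis ` {\<beta><..<\<beta>+\<delta>} \<noteq> {}" using d by auto
    qed
  next
    case nR: False
    show ?thesis
    proof (cases "cis ` {\<beta>-\<delta><..<\<beta>} \<subseteq> B")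
      case True
      show ?thesis
      proof (rule found[OF True])
        show "cis ` {\<beta>-\<delta><..<\<beta>} \<subseteq> - A" by (rule img_sub[OF _ d(3)]) auto
        show "openin (top_of_set circle) (cis ` {\<beta>-\<delta><..<\<beta>})" using d pi by (intro arc_open) auto
        show "cis ` {\<beta>-\<delta><..<\<beta>} \<noteq> {}" using d by auto
      qed
    next
      case nL: False
      obtain p where p: "\<beta> < p" "p < \<beta>+\<delta>" "cis p \<notin> B" using nR by (auto simp: image_subset_iff)
      obtain q where q: "\<beta>-\<delta> < q" "q < \<beta>" "cis q \<notin> B" using nL by (auto simp: image_subset_iff)
      have "openin (top_of_set circle) (cis ` {q<..<p})" using p q d pi by (intro arc_open) auto
      then obtain T1 where T1: "open T1" "cis ` {q<..<p} = circle \<inter> T1" using openin_open by blast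
      have "openin (top_of_set circle) (cis ` {p<..<q+2*pi})" using p q d pi by (intro arc_open) auto
      then obtain T2 where T2: "open T2" "cis ` {p<..<q+2*pi} = circle \<inter> T2" using openin_open by blast
      have cov: "B \<subseteq> T1 \<union> T2"
      proof
        fix x assume "x \<in> B"
        then have "x \<in> circle" using H by auto
        then have "x \<in> cis ` {q<..<p} \<union> cis ` {p..q+2*pi}"
          using arc_cover[of q p] p q d pi by auto
        then show "x \<in> T1 \<union> T2"
        proof
          assume "x \<in> cis ` {q<..<p}" then show ?thesis using T1 by auto
        next
          assume "x \<in> cis ` {p..q+2*pi}"
          then obtain \<phi> where \<phi>: "p \<le> \<phi>" "\<phi> \<le> q+2*pi" "x = cis \<phi>" by auto
          have "\<phi> \<noteq> p" using \<phi> p \<open>x \<in> B\<close> by auto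
          moreover have "\<phi> \<noteq> q+2*pi" using \<phi> q \<open>x \<in> B\<close> cis_shift by auto
          ultimately have "x \<in> cis ` {p<..<q+2*pi}" using \<phi> by auto
          then show ?thesis using T2 by auto
        qed
      qed
      have disj: "T1 \<inter> T2 \<inter> B = {}"
      proof -
        have "cis ` {q<..<p} \<inter> cis ` {p<..<q+2*pi} = {}"
          using arc_disj_set[of p q] p q d pi by auto
        then show ?thesis using T1 T2 H by blast
      qed
      have "b \<in> T1" using T1 p q \<open>b = cis \<beta>\<close> by auto
      then have "T2 \<inter> B = {}" using connectedD[OF _ T1(1) T2(1) disj cov] H b
        by (auto simp: continuum_def)
      then have "B \<subseteq> cis ` {q<..<p}" using cov T1 H by auto
      also have "\<dots> \<subseteq> - A" by (rule img_sub[OF _ d(3)]) (use p q in auto)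
      finally have "A = {}" using H by auto
      then show ?thesis using H by (auto simp: continuum_def)
    qed
  qed
qed


lemma e_d:
  fixes g :: "complex \<Rightarrow> 'a::metric_space"
  assumes cg: "continuous_on circle g" and irr: "irreducible_map circle g"
  shows "almost_injective circle g"
proof -
  let ?S = circle
  define M where "M n = {p \<in> ?S \<times> ?S. dist (g (fst p)) (g (snd p)) \<le> 0} \<inter>
                        {p \<in> ?S \<times> ?S. 1 / real (Suc n) \<le> dist (fst p) (snd p)}" for n
  define Op where "Op n = ?S - fst ` M n" for n
  have cS: "compact ?S" "closed ?S" by (auto simp: circle_def)
  have cSS: "compact (?S \<times> ?S)" using cS by (simp add: compact_Times)
  have cgf: "continuous_on (?S \<times> ?S) (\<lambda>p. g (fst p))"
    by (rule continuous_on_compose2[OF cg continuous_on_fst]) auto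
  have cgs: "continuous_on (?S \<times> ?S) (\<lambda>p. g (snd p))"
    by (rule continuous_on_compose2[OF cg continuous_on_snd]) auto
  have closedM: "closed (M n)" for n
    unfolding M_def
    by (intro closed_Int continuous_on_closed_Collect_le continuous_intros cgf cgs
        compact_imp_closed cSS continuous_on_dist continuous_on_fst continuous_on_snd continuous_on_id)
  have compM: "compact (fst ` M n)" for n
  proof -
    have "M n = M n \<inter> (?S \<times> ?S)" unfolding M_def by auto
    then have "compact (M n)" using closed_Int_compact[OF closedM cSS] by metis
    then show ?thesis by (intro compact_continuous_image continuous_intros)
  qed
  have openO: "openin (top_of_set ?S) (Op n)" for n
  proof -
    have "Op n = ?S \<inter> (- fst ` M n)" unfolding Op_def by auto
    moreover have "open (- fst ` M n)" using compM compact_imp_closed by blast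
    ultimately show ?thesis by auto
  qed
  have denseO: "?S \<subseteq> closure (Op n)" for n
  proof
    fix z assume z: "z \<in> ?S"
    show "z \<in> closure (Op n)"
      unfolding closure_approachable
    proof (intro allI impI)
      fix e :: real assume e: "e > 0"
      define \<rho> where "\<rho> = min e (1 / (2 * real (Suc n)))"
      have r0: "\<rho> > 0" using e by (simp add: \<rho>_def)
      have r1: "\<rho> \<le> e" by (simp add: \<rho>_def)
      have "\<rho> \<le> 1 / (2 * real (Suc n))" by (simp add: \<rho>_def)
      then have "2 * \<rho> \<le> 2 * (1 / (2 * real (Suc n)))" by linarith
      also have "\<dots> = 1 / real (Suc n)" by (simp add: divide_simps)
      finally have r2: "2 * \<rho> \<le> 1 / real (Suc n)" .
      note \<rho> = r0 r1 r2
      obtain \<theta> where z\<theta>: "z = cis \<theta>" using circle_cover z by blast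
      obtain \<delta> where d: "\<delta> > 0" "\<delta> \<le> 1" "cis ` {\<theta>-\<delta>..\<theta>+\<delta>} \<subseteq> ball z \<rho>"
        using cis_nbhd[of "ball z \<rho>" \<theta>] \<rho> z\<theta> by auto
      have pi: "pi > 3" by (rule pi_gt3)
      define K where "K = cis ` {\<theta>+\<delta>..\<theta>-\<delta>+2*pi}"
      have contK: "continuum K" unfolding K_def using d pi by (intro arc_continuum) auto
      have zK: "z \<notin> K" unfolding K_def z\<theta>
        using arc_disj[of "\<theta>-\<delta>" \<theta> "\<theta>+\<delta>"] d by fastforce
      have KS: "K \<subseteq> ?S" unfolding K_def by auto
      have out: "x \<in> ball z \<rho>" if "x \<in> ?S" "x \<notin> K" for x
      proof -
        have "x \<in> cis ` {\<theta>-\<delta><..<\<theta>+\<delta>} \<union> K"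
          using arc_cover[of "\<theta>-\<delta>" "\<theta>+\<delta>"] d pi that unfolding K_def by auto
        moreover have "cis ` {\<theta>-\<delta><..<\<theta>+\<delta>} \<subseteq> ball z \<rho>" by (rule img_sub[OF _ d(3)]) auto
        ultimately show ?thesis using that by blast
      qed
      have "g ` K \<subset> g ` ?S" using irr contK zK KS z unfolding irreducible_map_def by blast
      then obtain s where s: "s \<in> ?S" "g s \<notin> g ` K" by auto
      have sK: "s \<notin> K" using s by auto
      have "s \<in> Op n"
      proof -
        have "s \<notin> fst ` M n"
        proof
          assume "s \<in> fst ` M n"
          then obtain u where u: "(s, u) \<in> M n" by force
          then have uS: "u \<in> ?S" and gu: "g u = g s" and du: "1 / real (Suc n) \<le> dist s u"
            unfolding M_def by auto
          have "u \<notin> K"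
          proof
            assume "u \<in> K"
            then have "g u \<in> g ` K" by (rule imageI)
            then show False using gu s(2) by simp
          qed
          then have "dist u z < \<rho>" using out uS by (simp add: dist_commute)
          moreover have "dist s z < \<rho>" using out s(1) sK by (simp add: dist_commute)
          ultimately have "dist s u < 2 * \<rho>" using dist_triangle3[of s u z] by (simp add: dist_commute)
          then show False using du \<rho> by linarith
        qed
        then show ?thesis using s unfolding Op_def by auto
      qed
      moreover have "dist s z < e" using out[OF s(1) sK] \<rho> by (simp add: dist_commute)
      ultimately show "\<exists>y\<in>Op n. dist y z < e" by blast
    qed
  qed
  have "?S \<subseteq> closure (\<Inter> (range Op))"
    by (rule Baire) (use cS openO denseO in auto)
  moreover have "\<Inter> (range Op) \<subseteq> {x \<in> ?S. {y \<in> ?S. g y = g x} = {x}}"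
  proof
    fix x assume x: "x \<in> \<Inter> (range Op)"
    then have xS: "x \<in> ?S" unfolding Op_def by auto
    have "y = x" if "y \<in> ?S" "g y = g x" for y
    proof (rule ccontr)
      assume "y \<noteq> x"
      then have "dist x y > 0" by simp
      then obtain n where n: "inverse (real (Suc n)) < dist x y" using reals_Archimedean by blast
      then have "(x, y) \<in> M n" unfolding M_def using xS that by (auto simp: field_simps)
      then have "x \<notin> Op n" unfolding Op_def by force
      then show False using x by auto
    qed
    then show "x \<in> {x \<in> ?S. {y \<in> ?S. g y = g x} = {x}}" using xS by auto
  qed
  ultimately show ?thesis unfolding almost_injective_def using closure_mono by blast
qed


lemma key_pos:
  fixes F :: "complex \<Rightarrow> real" and g :: "complex \<Rightarrow> 'a" and \<gamma>1 \<gamma>2 :: "real \<Rightarrow> complex"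
  assumes dense: "circle \<subseteq> closure (injpts g)"
    and Ob: "openin (top_of_set circle) Ob" "Ob \<subseteq> Q" and QS: "Q \<subseteq> circle"
    and cF: "continuous_on Q F"
    and g1: "continuous_on {0..1} \<gamma>1" "\<gamma>1 ` {0<..<1} \<subseteq> Ob" "\<gamma>1 ` {0..1} \<subseteq> Q"
    and g2: "continuous_on {0..1} \<gamma>2" "\<gamma>2 ` {0..1} \<subseteq> Q - Ob"
    and v: "F (\<gamma>1 0) = c" "F (\<gamma>2 0) = c" "F (\<gamma>1 1) > c" "F (\<gamma>2 1) > c"
    and twin: "\<And>s s'. s \<in> Q \<Longrightarrow> s' \<in> Q \<Longrightarrow> F s = F s' \<Longrightarrow> g s = g s'"
  shows False
proof -
  define m where "m = min (F (\<gamma>1 1)) (F (\<gamma>2 1))"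
  have m: "m > c" "m \<le> F (\<gamma>1 1)" "m \<le> F (\<gamma>2 1)" using v by (auto simp: m_def)
  define W where "W = Ob \<inter> F -` {c<..<m}"
  have cFO: "continuous_on Ob F" using cF Ob(2) continuous_on_subset by blast
  have "openin (top_of_set Ob) W" unfolding W_def
    by (rule continuous_openin_preimage_gen[OF cFO]) simp
  then have oW: "openin (top_of_set circle) W" using Ob(1) openin_trans by blast
  have c1: "continuous_on {0..1} (\<lambda>\<tau>. F (\<gamma>1 \<tau>))"
    by (rule continuous_on_compose2[OF cF g1(1) g1(3)])
  have c2: "continuous_on {0..1} (\<lambda>\<tau>. F (\<gamma>2 \<tau>))"
    by (rule continuous_on_compose2[OF cF g2(1)]) (use g2(2) in auto)
  obtain \<tau> where \<tau>: "0 \<le> \<tau>" "\<tau> \<le> 1" "F (\<gamma>1 \<tau>) = (c + m) / 2"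
    using IVT'[of "\<lambda>\<tau>. F (\<gamma>1 \<tau>)" 0 "(c+m)/2" 1] c1 v m by auto
  have "\<tau> \<noteq> 0" using \<tau> v m by auto
  moreover have "\<tau> \<noteq> 1" using \<tau> v m by auto
  ultimately have "\<tau> \<in> {0<..<1}" using \<tau> by simp
  then have "\<gamma>1 \<tau> \<in> \<gamma>1 ` {0<..<1}" by (rule imageI)
  then have g1t: "\<gamma>1 \<tau> \<in> Ob" using g1(2) by blast
  have "(c + m) / 2 \<in> {c<..<m}" using m by simp
  then have "\<gamma>1 \<tau> \<in> W" unfolding W_def using g1t \<tau>(3) by simp
  then have "W \<noteq> {}" by blast
  moreover have Dsub: "injpts g \<subseteq> circle" unfolding injpts_def by blast
  ultimately obtain t where t: "t \<in> W" "t \<in> injpts g"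
    using dense_open_meets[OF dense Dsub oW] by blast
  have tO: "t \<in> Ob" and Ft: "c < F t" "F t < m" using t(1) unfolding W_def by simp_all
  obtain \<tau>' where \<tau>': "0 \<le> \<tau>'" "\<tau>' \<le> 1" "F (\<gamma>2 \<tau>') = F t"
    using IVT'[of "\<lambda>\<tau>. F (\<gamma>2 \<tau>)" 0 "F t" 1] c2 v m Ft by auto
  have "\<gamma>2 \<tau>' \<in> \<gamma>2 ` {0..1}" using \<tau>' by simp
  then have s'Q: "\<gamma>2 \<tau>' \<in> Q - Ob" using g2(2) by blast
  have tQ: "t \<in> Q" using tO Ob(2) by blast
  have s'Q1: "\<gamma>2 \<tau>' \<in> Q" using s'Q by simp
  have "g (\<gamma>2 \<tau>') = g t" by (rule twin[OF s'Q1 tQ \<tau>'(3)])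
  moreover have "\<gamma>2 \<tau>' \<in> circle" using s'Q1 QS by blast
  ultimately have "\<gamma>2 \<tau>' = t" using injptsD[OF t(2)] by simp
  then show False using s'Q tO by simp
qed

lemma key:
  fixes F :: "complex \<Rightarrow> real" and g :: "complex \<Rightarrow> 'a" and \<gamma>1 \<gamma>2 :: "real \<Rightarrow> complex"
  assumes dense: "circle \<subseteq> closure (injpts g)"
    and Ob: "openin (top_of_set circle) Ob" "Ob \<subseteq> Q" and QS: "Q \<subseteq> circle"
    and cF: "continuous_on Q F"
    and g1: "continuous_on {0..1} \<gamma>1" "\<gamma>1 ` {0<..<1} \<subseteq> Ob" "\<gamma>1 ` {0..1} \<subseteq> Q"
    and g2: "continuous_on {0..1} \<gamma>2" "\<gamma>2 ` {0..1} \<subseteq> Q - Ob"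
    and v: "F (\<gamma>1 0) = c" "F (\<gamma>2 0) = c"
      "(F (\<gamma>1 1) > c \<and> F (\<gamma>2 1) > c) \<or> (F (\<gamma>1 1) < c \<and> F (\<gamma>2 1) < c)"
    and twin: "\<And>s s'. s \<in> Q \<Longrightarrow> s' \<in> Q \<Longrightarrow> F s = F s' \<Longrightarrow> g s = g s'"
  shows False
  using v(3)
proof
  assume a: "F (\<gamma>1 1) > c \<and> F (\<gamma>2 1) > c"
  have a1: "F (\<gamma>1 1) > c" and a2: "F (\<gamma>2 1) > c" using a by simp_all
  show False by (rule key_pos[OF dense Ob QS cF g1 g2 v(1,2) a1 a2 twin])
next
  assume a: "F (\<gamma>1 1) < c \<and> F (\<gamma>2 1) < c"
  have cF': "continuous_on Q (\<lambda>s. - F s)" using cF by (intro continuous_intros)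
  show False
  proof (rule key_pos[OF dense Ob QS cF' g1 g2, of "-c"])
    show "- F (\<gamma>1 0) = - c" "- F (\<gamma>2 0) = - c" using v by auto
    show "- F (\<gamma>1 1) > - c" "- F (\<gamma>2 1) > - c" using a by auto
    show "\<And>s s'. s \<in> Q \<Longrightarrow> s' \<in> Q \<Longrightarrow> - F s = - F s' \<Longrightarrow> g s = g s'"
      by (rule twin) auto
  qed
qed


lemma f_d:
  assumes surj: "g ` circle = X"
    and eul: "edgewise_eulerian circle X g" and zd: "zero_dimensional {s \<in> circle. g s \<in> Gr X}"
  shows "almost_injective circle g"
  unfolding almost_injective_def
proof
  fix z assume z: "z \<in> circle"
  show "z \<in> closure {x \<in> circle. {y \<in> circle. g y = g x} = {x}}"
    unfolding closure_approachable
  proof (intro allI impI)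
    fix e :: real assume e: "e > 0"
    obtain \<theta> where z\<theta>: "z = cis \<theta>" using circle_cover z by blast
    obtain \<delta> where d: "\<delta> > 0" "\<delta> \<le> 1" "cis ` {\<theta>-\<delta>..\<theta>+\<delta>} \<subseteq> ball z e"
      using cis_nbhd[of "ball z e" \<theta>] e z\<theta> by auto
    have pi: "pi > 3" by (rule pi_gt3)
    define C where "C = cis ` {\<theta>..\<theta>+\<delta>}"
    have CB: "C \<subseteq> ball z e" unfolding C_def by (rule img_sub[OF _ d(3)]) auto
    have CS: "C \<subseteq> circle" unfolding C_def by auto
    show "\<exists>y\<in>{x \<in> circle. {y \<in> circle. g y = g x} = {x}}. dist y z < e"
    proof (cases "\<exists>w \<in> C. g w \<in> edge_union X")
      case True
      then obtain w where w: "w \<in> C" "g w \<in> edge_union X" by blast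
      have "\<forall>x \<in> edge_union X. \<exists>t. {s \<in> circle. g s = x} = {t}"
        using eul unfolding edgewise_eulerian_def .
      then obtain t where t: "{s \<in> circle. g s = g w} = {t}" using w(2) by blast
      have wS: "w \<in> circle" using w(1) CS by blast
      then have "w \<in> {s \<in> circle. g s = g w}" by simp
      then have "w = t" using t by simp
      then have "{y \<in> circle. g y = g w} = {w}" using t by simp
      then have "w \<in> {x \<in> circle. {y \<in> circle. g y = g x} = {x}}" using wS by simp
      moreover have "w \<in> ball z e" using CB w(1) by blast
      then have "dist w z < e" by (simp add: dist_commute)
      ultimately show ?thesis by blast
    next
      case False
      let ?P = "{s \<in> circle. g s \<in> Gr X}"
      have CP: "C \<subseteq> ?P"
      proof
        fix c assume c: "c \<in> C"
        then have cS: "c \<in> circle" using CS by blast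
        then have "g c \<in> X" using surj by blast
        moreover have "g c \<notin> edge_union X" using False c by blast
        ultimately show "c \<in> ?P" using cS unfolding Gr_def by simp
      qed
      have zC: "z \<in> C" unfolding C_def z\<theta> using d by auto
      define w where "w = cis (\<theta>+\<delta>)"
      have wC: "w \<in> C" unfolding C_def w_def using d by auto
      have "w \<noteq> z"
      proof
        assume "w = z"
        then have "\<theta> + \<delta> = \<theta>" unfolding w_def z\<theta> by (rule cis_inj) (use d pi in auto)
        then show False using d by auto
      qed
      define \<rho> where "\<rho> = dist z w"
      have r0: "\<rho> > 0" using \<open>w \<noteq> z\<close> by (simp add: \<rho>_def)
      have zP: "z \<in> ?P" using zC CP by blast
      have "\<forall>x \<in> ?P. \<forall>U. open U \<and> x \<in> U \<longrightarrow>
        (\<exists>V. openin (top_of_set ?P) V \<and> closedin (top_of_set ?P) V \<and> x \<in> V \<and> V \<subseteq> U)"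
        using zd unfolding zero_dimensional_def .
      then have "\<exists>V. openin (top_of_set ?P) V \<and> closedin (top_of_set ?P) V \<and> z \<in> V \<and> V \<subseteq> ball z \<rho>"
        using zP r0 by simp
      then obtain V where V: "openin (top_of_set ?P) V" "closedin (top_of_set ?P) V" "z \<in> V" "V \<subseteq> ball z \<rho>"
        by blast
      obtain U1 where U1: "open U1" "V = ?P \<inter> U1" using V(1) openin_open by metis
      obtain F1 where F1: "closed F1" "V = ?P \<inter> F1" using V(2) closedin_closed by metis
      have conC: "connected C" unfolding C_def by (intro connected_continuous_image cont_cis) auto
      have cov: "C \<subseteq> U1 \<union> (- F1)"
      proof
        fix c assume c: "c \<in> C"
        then have "c \<in> ?P" using CP by blast
        then show "c \<in> U1 \<union> (- F1)" using U1(2) F1(2) by blast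
      qed
      have dis: "U1 \<inter> (- F1) \<inter> C = {}"
      proof -
        have "c \<notin> U1 \<inter> (- F1)" if "c \<in> C" for c
        proof -
          have "c \<in> ?P" using that CP by blast
          then show ?thesis using U1(2) F1(2) by blast
        qed
        then show ?thesis by blast
      qed
      have "z \<in> U1" using V(3) U1(2) by blast
      then have "U1 \<inter> C \<noteq> {}" using zC by blast
      then have "(- F1) \<inter> C = {}" using connectedD[OF conC U1(1) open_Compl[OF F1(1)] dis cov] by blast
      then have "w \<in> F1" using wC by blast
      moreover have "w \<in> ?P" using wC CP by blast
      ultimately have "w \<in> V" using F1(2) by blast
      then have "w \<in> ball z \<rho>" using V(4) by blast
      then show ?thesis by (simp add: \<rho>_def)
    qed
  qed
qed

lemma edge_union_sub: "edge_union X \<subseteq> X"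
  unfolding edge_union_def edge_def using openin_subset by fastforce

lemma no_open_in_Gr:
  fixes g :: "complex \<Rightarrow> 'a::metric_space"
  assumes cg: "continuous_on circle g" and surj: "g ` circle = X" and ai: "almost_injective circle g"
    and pg: "peano_graph X"
    and W: "openin (top_of_set circle) W" "W \<noteq> {}"
  shows "\<not> W \<subseteq> {s \<in> circle. g s \<in> Gr X}"
proof
  assume WP: "W \<subseteq> {s \<in> circle. g s \<in> Gr X}"
  have si: "strongly_irreducible circle g" by (rule d_c[OF ai])
  obtain T where T: "open T" "W = circle \<inter> T" using W(1) openin_open by metis
  have eq: "circle - W = circle \<inter> (- T)" using T(2) by blast
  have cl: "closedin (top_of_set circle) (circle - W)"
    unfolding eq by (rule closedin_closed_Int) (rule closed_Compl[OF T(1)])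
  have ps: "circle - W \<subset> circle" using W(2) T(2) by blast
  have "\<forall>A. closedin (top_of_set circle) A \<and> A \<subset> circle \<longrightarrow> g ` A \<subset> g ` circle"
    using si unfolding strongly_irreducible_def .
  then have "g ` (circle - W) \<subset> g ` circle" using cl ps by simp
  then obtain x where "x \<in> g ` circle - g ` (circle - W)" by (metis psubset_imp_ex_mem)
  then have x: "x \<in> X" "x \<notin> g ` (circle - W)" unfolding surj by simp_all
  have "compact (circle \<inter> (- T))"
    by (rule compact_Int_closed) (simp add: circle_def, rule closed_Compl[OF T(1)])
  then have cW: "compact (circle - W)" unfolding eq .
  have "continuous_on (circle - W) g" using cg by (rule continuous_on_subset) blast
  then have "compact (g ` (circle - W))" using cW by (intro compact_continuous_image)
  then have oO: "open (- g ` (circle - W))" using compact_imp_closed open_Compl by blast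
  have "x \<in> closure (edge_union X)" using pg x(1) unfolding peano_graph_def by blast
  moreover have "x \<in> - g ` (circle - W)" using x(2) by blast
  ultimately have "(- g ` (circle - W)) \<inter> edge_union X \<noteq> {}"
    using open_Int_closure_eq_empty[OF oO] by blast
  then obtain e where e: "e \<in> edge_union X" "e \<notin> g ` (circle - W)" by blast
  then have "e \<in> X" using edge_union_sub by blast
  then have "e \<in> g ` circle" unfolding surj .
  then obtain s where s: "e = g s" "s \<in> circle" by (rule imageE)
  note s = s(2,1)
  have "s \<in> W"
  proof (rule ccontr)
    assume "s \<notin> W"
    then have "s \<in> circle - W" using s(1) by blast
    then have "g s \<in> g ` (circle - W)" by (rule imageI)
    then show False using e(2) s(2) by simp
  qed
  then have "g s \<in> Gr X" using WP by blast
  then show False using s(2) e(1) unfolding Gr_def by simp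
qed

lemma d_zero:
  fixes g :: "complex \<Rightarrow> 'a::metric_space"
  assumes cg: "continuous_on circle g" and surj: "g ` circle = X" and ai: "almost_injective circle g"
    and pg: "peano_graph X"
  shows "zero_dimensional {s \<in> circle. g s \<in> Gr X}"
  unfolding zero_dimensional_def
proof (intro ballI allI impI)
  let ?P = "{s \<in> circle. g s \<in> Gr X}"
  fix t U assume t: "t \<in> ?P" and U: "open U \<and> t \<in> U"
  obtain \<theta> where t\<theta>: "t = cis \<theta>" using circle_cover t by blast
  obtain \<delta> where d: "\<delta> > 0" "\<delta> \<le> 1" "cis ` {\<theta>-\<delta>..\<theta>+\<delta>} \<subseteq> U"
    using cis_nbhd[of U \<theta>] U t\<theta> by auto
  have pi: "pi > 3" by (rule pi_gt3)
  have "\<not> cis ` {\<theta><..<\<theta>+\<delta>} \<subseteq> ?P"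
    by (rule no_open_in_Gr[OF cg surj ai pg]) (use d pi in \<open>auto intro!: arc_open\<close>)
  then obtain p where p: "\<theta> < p" "p < \<theta>+\<delta>" "cis p \<notin> ?P" by (auto simp: image_subset_iff)
  have "\<not> cis ` {\<theta>-\<delta><..<\<theta>} \<subseteq> ?P"
    by (rule no_open_in_Gr[OF cg surj ai pg]) (use d pi in \<open>auto intro!: arc_open\<close>)
  then obtain q where q: "\<theta>-\<delta> < q" "q < \<theta>" "cis q \<notin> ?P" by (auto simp: image_subset_iff)
  define V where "V = ?P \<inter> cis ` {q<..<p}"
  have "openin (top_of_set circle) (cis ` {q<..<p})" using p q d pi by (intro arc_open) auto
  then obtain T1 where T1: "open T1" "cis ` {q<..<p} = circle \<inter> T1" using openin_open by blast
  have "V = ?P \<inter> T1" unfolding V_def using T1 by auto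
  then have "openin (top_of_set ?P) V" using T1(1) by auto
  moreover have "V = ?P \<inter> cis ` {q..p}"
  proof
    show "V \<subseteq> ?P \<inter> cis ` {q..p}" unfolding V_def by auto
    show "?P \<inter> cis ` {q..p} \<subseteq> V"
    proof
      fix x assume x: "x \<in> ?P \<inter> cis ` {q..p}"
      then obtain \<phi> where \<phi>: "q \<le> \<phi>" "\<phi> \<le> p" "x = cis \<phi>" by auto
      have "\<phi> \<noteq> q" "\<phi> \<noteq> p" using x \<phi> p q by auto
      then show "x \<in> V" unfolding V_def using x \<phi> by auto
    qed
  qed
  then have "closedin (top_of_set ?P) V"
    using closedin_closed_Int[OF compact_imp_closed[OF arc_compact]] by metis
  moreover have "t \<in> V" unfolding V_def using t t\<theta> p q by auto
  moreover have "V \<subseteq> U"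
  proof -
    have "cis ` {q<..<p} \<subseteq> cis ` {\<theta>-\<delta>..\<theta>+\<delta>}" by (rule image_mono) (use p q in auto)
    then have "V \<subseteq> cis ` {\<theta>-\<delta>..\<theta>+\<delta>}" unfolding V_def by blast
    then show ?thesis using d(3) by auto
  qed
  ultimately show "\<exists>V. openin (top_of_set ?P) V \<and> closedin (top_of_set ?P) V \<and> t \<in> V \<and> V \<subseteq> U"
    by blast
qed


lemma seg_cont: "continuous_on A (\<lambda>\<tau>::real. cis (e + \<tau>*(\<phi> - e)))"
  by (intro continuous_intros)

lemma seg_open_up: "0 < \<tau> \<Longrightarrow> \<tau> < 1 \<Longrightarrow> e < \<phi> \<Longrightarrow> e < e + \<tau>*(\<phi>-e) \<and> e + \<tau>*(\<phi>-e) < (\<phi>::real)"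
proof -
  assume a: "0 < \<tau>" "\<tau> < 1" "e < \<phi>"
  then have "0 < \<tau>*(\<phi>-e)" by simp
  moreover have "\<tau>*(\<phi>-e) < 1*(\<phi>-e)" using a by (intro mult_strict_right_mono) auto
  ultimately show ?thesis by auto
qed

lemma seg_open_down: "0 < \<tau> \<Longrightarrow> \<tau> < 1 \<Longrightarrow> \<phi> < e \<Longrightarrow> \<phi> < e + \<tau>*(\<phi>-e) \<and> e + \<tau>*(\<phi>-e) < (e::real)"
proof -
  assume a: "0 < \<tau>" "\<tau> < 1" "\<phi> < e"
  then have "0 < \<tau>*(e-\<phi>)" by simp
  moreover have "\<tau>*(e-\<phi>) < 1*(e-\<phi>)" using a by (intro mult_strict_right_mono) auto
  ultimately show ?thesis by (auto simp: algebra_simps)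
qed

lemma seg_closed_up: "0 \<le> \<tau> \<Longrightarrow> \<tau> \<le> 1 \<Longrightarrow> e \<le> \<phi> \<Longrightarrow> e \<le> e + \<tau>*(\<phi>-e) \<and> e + \<tau>*(\<phi>-e) \<le> (\<phi>::real)"
proof -
  assume a: "0 \<le> \<tau>" "\<tau> \<le> 1" "e \<le> \<phi>"
  then have "0 \<le> \<tau>*(\<phi>-e)" by simp
  moreover have "\<tau>*(\<phi>-e) \<le> 1*(\<phi>-e)" using a by (intro mult_right_mono) auto
  ultimately show ?thesis by auto
qed

lemma seg_closed_down: "0 \<le> \<tau> \<Longrightarrow> \<tau> \<le> 1 \<Longrightarrow> \<phi> \<le> e \<Longrightarrow> \<phi> \<le> e + \<tau>*(\<phi>-e) \<and> e + \<tau>*(\<phi>-e) \<le> (e::real)"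
proof -
  assume a: "0 \<le> \<tau>" "\<tau> \<le> 1" "\<phi> \<le> e"
  then have "0 \<le> \<tau>*(e-\<phi>)" by simp
  moreover have "\<tau>*(e-\<phi>) \<le> 1*(e-\<phi>)" using a by (intro mult_right_mono) auto
  ultimately show ?thesis by (auto simp: algebra_simps)
qed

lemma seg_img_up: "e < \<phi> \<Longrightarrow> \<phi> \<le> U \<Longrightarrow> (\<lambda>\<tau>::real. cis (e + \<tau>*(\<phi>-e))) ` {0<..<1} \<subseteq> cis ` {e<..<U}"
proof (rule seg_img)
  fix \<tau> :: real assume a: "e < \<phi>" "\<phi> \<le> U" "\<tau> \<in> {0<..<1}"
  then have "e < e + \<tau>*(\<phi>-e) \<and> e + \<tau>*(\<phi>-e) < \<phi>" using seg_open_up[of \<tau> e \<phi>] by simp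
  then show "e + \<tau>*(\<phi>-e) \<in> {e<..<U}" using a by simp
qed

lemma seg_img_down: "\<phi> < e \<Longrightarrow> L \<le> \<phi> \<Longrightarrow> (\<lambda>\<tau>::real. cis (e + \<tau>*(\<phi>-e))) ` {0<..<1} \<subseteq> cis ` {L<..<e}"
proof (rule seg_img)
  fix \<tau> :: real assume a: "\<phi> < e" "L \<le> \<phi>" "\<tau> \<in> {0<..<1}"
  then have "\<phi> < e + \<tau>*(\<phi>-e) \<and> e + \<tau>*(\<phi>-e) < e" using seg_open_down[of \<tau> \<phi> e] by simp
  then show "e + \<tau>*(\<phi>-e) \<in> {L<..<e}" using a by simp
qed

lemma seg_img_cup: "e \<le> \<phi> \<Longrightarrow> \<phi> \<le> U \<Longrightarrow> (\<lambda>\<tau>::real. cis (e + \<tau>*(\<phi>-e))) ` {0..1} \<subseteq> cis ` {e..U}"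
proof (rule seg_img)
  fix \<tau> :: real assume a: "e \<le> \<phi>" "\<phi> \<le> U" "\<tau> \<in> {0..1}"
  then have "e \<le> e + \<tau>*(\<phi>-e) \<and> e + \<tau>*(\<phi>-e) \<le> \<phi>" using seg_closed_up[of \<tau> e \<phi>] by simp
  then show "e + \<tau>*(\<phi>-e) \<in> {e..U}" using a by simp
qed

lemma seg_img_cdown: "\<phi> \<le> e \<Longrightarrow> L \<le> \<phi> \<Longrightarrow> (\<lambda>\<tau>::real. cis (e + \<tau>*(\<phi>-e))) ` {0..1} \<subseteq> cis ` {L..e}"
proof (rule seg_img)
  fix \<tau> :: real assume a: "\<phi> \<le> e" "L \<le> \<phi>" "\<tau> \<in> {0..1}"
  then have "\<phi> \<le> e + \<tau>*(\<phi>-e) \<and> e + \<tau>*(\<phi>-e) \<le> e" using seg_closed_down[of \<tau> \<phi> e] by simp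
  then show "e + \<tau>*(\<phi>-e) \<in> {L..e}" using a by simp
qed

lemma d_eul:
  fixes g :: "complex \<Rightarrow> 'a::metric_space"
  assumes cg: "continuous_on circle g" and surj: "g ` circle = X" and ai: "almost_injective circle g"
  shows "edgewise_eulerian circle X g"
  unfolding edgewise_eulerian_def
proof
  fix x assume "x \<in> edge_union X"
  then obtain E where E: "edge X E" "x \<in> E" unfolding edge_union_def by auto
  have EX: "E \<subseteq> X" using E(1) unfolding edge_def using openin_subset by fastforce
  then have "x \<in> g ` circle" using E(2) surj by blast
  then obtain t1 where t1': "x = g t1" "t1 \<in> circle" by (rule imageE)
  have t1: "t1 \<in> circle" "g t1 = x" using t1' by simp_all
  have dense: "circle \<subseteq> closure (injpts g)" by (rule ai_dense[OF ai])
  have Dsub: "injpts g \<subseteq> circle" by (auto simp: injpts_def)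
  have pi: "pi > 3" by (rule pi_gt3)
  have uniq: "t2 = t1" if t2: "t2 \<in> circle" "g t2 = x" for t2
  proof (rule ccontr)
    assume ne: "t2 \<noteq> t1"
    obtain h k where hk: "homeomorphism E {0<..<1::real} h k"
      using E(1) unfolding edge_def homeomorphic_def by blast
    have kh: "\<And>y. y \<in> E \<Longrightarrow> k (h y) = y" and ch: "continuous_on E h"
      using hk unfolding homeomorphism_def by auto
    obtain T where T: "open T" "E = X \<inter> T" using E(1) unfolding edge_def openin_open by blast
    define Q where "Q = {s \<in> circle. g s \<in> E}"
    have QS: "Q \<subseteq> circle" unfolding Q_def by auto
    have "Q = circle \<inter> g -` T"
    proof (rule set_eqI)
      fix s
      show "s \<in> Q \<longleftrightarrow> s \<in> circle \<inter> g -` T"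
      proof (cases "s \<in> circle")
        case True
        then have "g s \<in> g ` circle" by (rule imageI)
        then have "g s \<in> X" using surj by simp
        then show ?thesis using True T(2) unfolding Q_def by blast
      next
        case False
        then show ?thesis unfolding Q_def by simp
      qed
    qed
    then have "openin (top_of_set circle) Q" using continuous_openin_preimage_gen[OF cg T(1)] by simp
    then obtain TQ where TQ: "open TQ" "Q = circle \<inter> TQ" using openin_open by blast
    define F where "F s = h (g s)" for s
    have cF: "continuous_on Q F" unfolding F_def
      by (rule continuous_on_compose2[OF ch continuous_on_subset[OF cg QS]]) (auto simp: Q_def)
    have twin: "g s = g s'" if "s \<in> Q" "s' \<in> Q" "F s = F s'" for s s'
    proof -
      have "g s \<in> E" "g s' \<in> E" using that(1,2) unfolding Q_def by simp_all
      then have "g s = k (h (g s))" "g s' = k (h (g s'))" using kh by simp_all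
      moreover have "h (g s) = h (g s')" using that(3) unfolding F_def .
      ultimately show ?thesis by simp
    qed
    define c where "c = h x"
    have t1Q: "t1 \<in> Q" using t1 E(2) by (auto simp: Q_def)
    have nc: "F s \<noteq> c" if "s \<in> injpts g" "s \<in> Q" for s
    proof
      assume "F s = c"
      then have "F s = F t1" using t1 by (simp add: c_def F_def)
      then have gs: "g s = x" using twin[OF that(2) t1Q] t1 by simp
      have "t1 = s" using injptsD[OF that(1) t1(1)] gs t1 by simp
      moreover have "t2 = s" using injptsD[OF that(1) t2(1)] gs t2 by simp
      ultimately show False using ne by simp
    qed
    define \<rho> where "\<rho> = dist t1 t2 / 2"
    have \<rho>: "\<rho> > 0" using ne by (simp add: \<rho>_def)
    have balls: "ball t1 \<rho> \<inter> ball t2 \<rho> = {}"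
    proof (rule ccontr)
      assume "ball t1 \<rho> \<inter> ball t2 \<rho> \<noteq> {}"
      then obtain y where "dist t1 y < \<rho>" "dist t2 y < \<rho>" by auto
      then have "dist t1 t2 < 2 * \<rho>" using dist_triangle[of t1 t2 y] by (simp add: dist_commute)
      then show False by (simp add: \<rho>_def)
    qed
    obtain \<alpha> where \<alpha>: "t1 = cis \<alpha>" using circle_cover t1 by blast
    obtain \<beta> where \<beta>: "t2 = cis \<beta>" using circle_cover t2 by blast
    obtain \<delta>1 where d1: "\<delta>1 > 0" "\<delta>1 \<le> 1" "cis ` {\<alpha>-\<delta>1..\<alpha>+\<delta>1} \<subseteq> TQ \<inter> ball t1 \<rho>"
    proof -
      have o: "open (TQ \<inter> ball t1 \<rho>)" using TQ(1) by (simp add: open_Int)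
      have m: "cis \<alpha> \<in> TQ \<inter> ball t1 \<rho>" using t1Q TQ(2) \<alpha> \<rho> by simp
      show ?thesis using cis_nbhd[OF o m] that by blast
    qed
    have t2Q: "t2 \<in> Q" using t2 E(2) by (auto simp: Q_def)
    obtain \<delta>2 where d2: "\<delta>2 > 0" "\<delta>2 \<le> 1" "cis ` {\<beta>-\<delta>2..\<beta>+\<delta>2} \<subseteq> TQ \<inter> ball t2 \<rho>"
    proof -
      have o: "open (TQ \<inter> ball t2 \<rho>)" using TQ(1) by (simp add: open_Int)
      have m: "cis \<beta> \<in> TQ \<inter> ball t2 \<rho>" using t2Q TQ(2) \<beta> \<rho> by simp
      show ?thesis using cis_nbhd[OF o m] that by blast
    qed
    define \<delta> where "\<delta> = min \<delta>1 \<delta>2"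
    have d: "\<delta> > 0" "\<delta> \<le> 1" using d1 d2 by (auto simp: \<delta>_def)
    have A1: "cis ` {\<alpha>-\<delta>..\<alpha>+\<delta>} \<subseteq> Q \<inter> ball t1 \<rho>"
    proof -
      have "cis ` {\<alpha>-\<delta>..\<alpha>+\<delta>} \<subseteq> cis ` {\<alpha>-\<delta>1..\<alpha>+\<delta>1}" by (intro image_mono) (auto simp: \<delta>_def)
      then show ?thesis using d1 TQ by auto
    qed
    have A2: "cis ` {\<beta>-\<delta>..\<beta>+\<delta>} \<subseteq> Q \<inter> ball t2 \<rho>"
    proof -
      have "cis ` {\<beta>-\<delta>..\<beta>+\<delta>} \<subseteq> cis ` {\<beta>-\<delta>2..\<beta>+\<delta>2}" by (intro image_mono) (auto simp: \<delta>_def)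
      then show ?thesis using d2 TQ by auto
    qed
    define O1 where "O1 = cis ` {\<alpha><..<\<alpha>+\<delta>}"
    define O2 where "O2 = cis ` {\<alpha>-\<delta><..<\<alpha>}"
    define O3 where "O3 = cis ` {\<beta><..<\<beta>+\<delta>}"
    have oO1: "openin (top_of_set circle) O1" unfolding O1_def using d pi by (intro arc_open) auto
    have oO2: "openin (top_of_set circle) O2" unfolding O2_def using d pi by (intro arc_open) auto
    have oO3: "openin (top_of_set circle) O3" unfolding O3_def using d pi by (intro arc_open) auto
    have O1A: "O1 \<subseteq> Q \<inter> ball t1 \<rho>" unfolding O1_def by (rule img_sub[OF _ A1]) auto
    have O2A: "O2 \<subseteq> Q \<inter> ball t1 \<rho>" unfolding O2_def by (rule img_sub[OF _ A1]) auto
    have O3A: "O3 \<subseteq> Q \<inter> ball t2 \<rho>" unfolding O3_def by (rule img_sub[OF _ A2]) auto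
    have O1Q: "O1 \<subseteq> Q" using O1A by blast
    have O2Q: "O2 \<subseteq> Q" using O2A by blast
    have O3Q: "O3 \<subseteq> Q" using O3A by blast
    obtain s1 where s1: "s1 \<in> O1" "s1 \<in> injpts g"
      using dense_open_meets[OF dense Dsub oO1] d unfolding O1_def by auto
    obtain \<phi>1 where p1: "\<alpha> < \<phi>1" "\<phi>1 < \<alpha>+\<delta>" "s1 = cis \<phi>1" using s1 unfolding O1_def by auto
    obtain s2 where s2: "s2 \<in> O2" "s2 \<in> injpts g"
      using dense_open_meets[OF dense Dsub oO2] d unfolding O2_def by auto
    obtain \<phi>2 where p2: "\<alpha>-\<delta> < \<phi>2" "\<phi>2 < \<alpha>" "s2 = cis \<phi>2" using s2 unfolding O2_def by auto
    obtain s3 where s3: "s3 \<in> O3" "s3 \<in> injpts g"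
      using dense_open_meets[OF dense Dsub oO3] d unfolding O3_def by auto
    obtain \<phi>3 where p3: "\<beta> < \<phi>3" "\<phi>3 < \<beta>+\<delta>" "s3 = cis \<phi>3" using s3 unfolding O3_def by auto
    define \<gamma>1 where "\<gamma>1 \<tau> = cis (\<alpha> + \<tau>*(\<phi>1 - \<alpha>))" for \<tau> :: real
    define \<gamma>2 where "\<gamma>2 \<tau> = cis (\<alpha> + \<tau>*(\<phi>2 - \<alpha>))" for \<tau> :: real
    define \<gamma>3 where "\<gamma>3 \<tau> = cis (\<beta> + \<tau>*(\<phi>3 - \<beta>))" for \<tau> :: real
    have cg1: "continuous_on {0..1} \<gamma>1" unfolding \<gamma>1_def by (rule seg_cont)
    have cg2: "continuous_on {0..1} \<gamma>2" unfolding \<gamma>2_def by (rule seg_cont)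
    have cg3: "continuous_on {0..1} \<gamma>3" unfolding \<gamma>3_def by (rule seg_cont)
    have i1: "\<gamma>1 ` {0<..<1} \<subseteq> O1" unfolding \<gamma>1_def O1_def
      by (rule seg_img_up) (use p1 in auto)
    have i2: "\<gamma>2 ` {0<..<1} \<subseteq> O2" unfolding \<gamma>2_def O2_def
      by (rule seg_img_down) (use p2 in auto)
    have i3: "\<gamma>3 ` {0<..<1} \<subseteq> O3" unfolding \<gamma>3_def O3_def
      by (rule seg_img_up) (use p3 in auto)
    have c1: "\<gamma>1 ` {0..1} \<subseteq> cis ` {\<alpha>..\<alpha>+\<delta>}" unfolding \<gamma>1_def
      by (rule seg_img_cup) (use p1 in auto)
    have c2: "\<gamma>2 ` {0..1} \<subseteq> cis ` {\<alpha>-\<delta>..\<alpha>}" unfolding \<gamma>2_def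
      by (rule seg_img_cdown) (use p2 in auto)
    have c3: "\<gamma>3 ` {0..1} \<subseteq> cis ` {\<beta>..\<beta>+\<delta>}" unfolding \<gamma>3_def
      by (rule seg_img_cup) (use p3 in auto)
    have C1: "cis ` {\<alpha>..\<alpha>+\<delta>} \<subseteq> Q \<inter> ball t1 \<rho>" by (rule img_sub[OF _ A1]) auto
    have C2: "cis ` {\<alpha>-\<delta>..\<alpha>} \<subseteq> Q \<inter> ball t1 \<rho>" by (rule img_sub[OF _ A1]) auto
    have C3: "cis ` {\<beta>..\<beta>+\<delta>} \<subseteq> Q \<inter> ball t2 \<rho>" by (rule img_sub[OF _ A2]) auto
    have O1B: "O1 \<subseteq> ball t1 \<rho>" using O1A by blast
    have O2B: "O2 \<subseteq> ball t1 \<rho>" using O2A by blast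
    have D12: "cis ` {\<alpha>-\<delta>..\<alpha>} \<inter> O1 = {}"
    proof (rule ccontr)
      assume "cis ` {\<alpha>-\<delta>..\<alpha>} \<inter> O1 \<noteq> {}"
      then obtain u v where uv: "\<alpha>-\<delta> \<le> u" "u \<le> \<alpha>" "\<alpha> < v" "v < \<alpha>+\<delta>" "cis u = cis v"
        unfolding O1_def by auto
      then have "u = v" using d pi by (intro cis_inj) auto
      then show False using uv by auto
    qed
    have D13: "cis ` {\<beta>..\<beta>+\<delta>} \<inter> O1 = {}" using C3 O1B balls by blast
    have D23: "cis ` {\<beta>..\<beta>+\<delta>} \<inter> O2 = {}" using C3 O2B balls by blast
    have e1: "\<gamma>1 0 = t1" "\<gamma>1 1 = s1" using \<alpha> p1 by (auto simp: \<gamma>1_def)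
    have e2: "\<gamma>2 0 = t1" "\<gamma>2 1 = s2" using \<alpha> p2 by (auto simp: \<gamma>2_def)
    have e3: "\<gamma>3 0 = t2" "\<gamma>3 1 = s3" using \<beta> p3 by (auto simp: \<gamma>3_def)
    have Ft1: "F t1 = c" "F t2 = c" using t1 t2 by (auto simp: F_def c_def)
    have v1: "F s1 \<noteq> c" using nc s1 O1Q by auto
    have v2: "F s2 \<noteq> c" using nc s2 O2Q by auto
    have v3: "F s3 \<noteq> c" using nc s3 O3Q by auto
    show False
    proof (cases "(F s1 > c \<and> F s2 > c) \<or> (F s1 < c \<and> F s2 < c)")
      case True
      show False
      proof (rule key[OF dense oO1 O1Q QS cF cg1 i1 _ cg2, of c])
        show "\<gamma>1 ` {0..1} \<subseteq> Q" using c1 C1 by blast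
        show "\<gamma>2 ` {0..1} \<subseteq> Q - O1" using c2 C2 D12 by blast
          show "F (\<gamma>1 0) = c" using e1 Ft1 by simp
          show "F (\<gamma>2 0) = c" using e2 Ft1 by simp
          show "(F (\<gamma>1 1) > c \<and> F (\<gamma>2 1) > c) \<or> (F (\<gamma>1 1) < c \<and> F (\<gamma>2 1) < c)"
            using True e1 e2 by simp
          show "\<And>s s'. s \<in> Q \<Longrightarrow> s' \<in> Q \<Longrightarrow> F s = F s' \<Longrightarrow> g s = g s'" by (rule twin)
        qed
    next
      case F12: False
      show False
      proof (cases "(F s1 > c \<and> F s3 > c) \<or> (F s1 < c \<and> F s3 < c)")
        case True
        show False
        proof (rule key[OF dense oO1 O1Q QS cF cg1 i1 _ cg3, of c])
          show "\<gamma>1 ` {0..1} \<subseteq> Q" using c1 C1 by blast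
          show "\<gamma>3 ` {0..1} \<subseteq> Q - O1" using c3 C3 D13 by blast
          show "F (\<gamma>1 0) = c" using e1 Ft1 by simp
          show "F (\<gamma>3 0) = c" using e3 Ft1 by simp
          show "(F (\<gamma>1 1) > c \<and> F (\<gamma>3 1) > c) \<or> (F (\<gamma>1 1) < c \<and> F (\<gamma>3 1) < c)"
            using True e1 e3 by simp
          show "\<And>s s'. s \<in> Q \<Longrightarrow> s' \<in> Q \<Longrightarrow> F s = F s' \<Longrightarrow> g s = g s'" by (rule twin)
        qed
      next
        case False
        then have True23: "(F s2 > c \<and> F s3 > c) \<or> (F s2 < c \<and> F s3 < c)"
          using F12 v1 v2 v3 by linarith
        show False
        proof (rule key[OF dense oO2 O2Q QS cF cg2 i2 _ cg3, of c])
          show "\<gamma>2 ` {0..1} \<subseteq> Q" using c2 C2 by blast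
          show "\<gamma>3 ` {0..1} \<subseteq> Q - O2" using c3 C3 D23 by blast
          show "F (\<gamma>2 0) = c" using e2 Ft1 by simp
          show "F (\<gamma>3 0) = c" using e3 Ft1 by simp
          show "(F (\<gamma>2 1) > c \<and> F (\<gamma>3 1) > c) \<or> (F (\<gamma>2 1) < c \<and> F (\<gamma>3 1) < c)"
            using True23 e2 e3 by simp
          show "\<And>s s'. s \<in> Q \<Longrightarrow> s' \<in> Q \<Longrightarrow> F s = F s' \<Longrightarrow> g s = g s'" by (rule twin)
        qed
      qed
    qed
  qed
  have "{s \<in> circle. g s = x} = {t1}"
  proof (rule set_eqI)
    fix s show "s \<in> {s \<in> circle. g s = x} \<longleftrightarrow> s \<in> {t1}"
    proof
      assume "s \<in> {s \<in> circle. g s = x}"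
      then have "s \<in> circle" "g s = x" by simp_all
      then have "s = t1" by (rule uniq)
      then show "s \<in> {t1}" by simp
    next
      assume "s \<in> {t1}"
      then show "s \<in> {s \<in> circle. g s = x}" using t1 by simp
    qed
  qed
  then show "\<exists>t. {s \<in> circle. g s = x} = {t}" by blast
qed


theorem theorem2p3:
  fixes g :: "complex \<Rightarrow> 'a::metric_space" and X :: "'a set"
  assumes "continuous_on circle g" and "g ` circle = X" and "peano_continuum X"
  shows "(arcwise_increasing circle g \<longleftrightarrow> hereditarily_irreducible circle g)
       \<and> (hereditarily_irreducible circle g \<longleftrightarrow> strongly_irreducible circle g)
       \<and> (strongly_irreducible circle g \<longleftrightarrow> almost_injective circle g)
       \<and> (almost_injective circle g \<longleftrightarrow> irreducible_map circle g)
       \<and> (peano_graph X \<longrightarrow>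
            (irreducible_map circle g \<longleftrightarrow>
               edgewise_eulerian circle X g \<and> zero_dimensional {s \<in> circle. g s \<in> Gr X}))"
proof -
  have ae: "arcwise_increasing circle g \<Longrightarrow> irreducible_map circle g" by (rule a_e)
  have ed: "irreducible_map circle g \<Longrightarrow> almost_injective circle g" by (rule e_d[OF assms(1)])
  have db: "almost_injective circle g \<Longrightarrow> hereditarily_irreducible circle g" by (rule d_b)
  have ba: "hereditarily_irreducible circle g \<Longrightarrow> arcwise_increasing circle g" by (rule b_a)
  have dc: "almost_injective circle g \<Longrightarrow> strongly_irreducible circle g" by (rule d_c)
  have ce: "strongly_irreducible circle g \<Longrightarrow> irreducible_map circle g" by (rule c_e)
  have gr: "irreducible_map circle g \<longleftrightarrow>
               edgewise_eulerian circle X g \<and> zero_dimensional {s \<in> circle. g s \<in> Gr X}"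
    if pg: "peano_graph X"
  proof
    assume "irreducible_map circle g"
    then have ai: "almost_injective circle g" by (rule ed)
    show "edgewise_eulerian circle X g \<and> zero_dimensional {s \<in> circle. g s \<in> Gr X}"
      using d_eul[OF assms(1,2) ai] d_zero[OF assms(1,2) ai pg] by blast
  next
    assume "edgewise_eulerian circle X g \<and> zero_dimensional {s \<in> circle. g s \<in> Gr X}"
    then have "almost_injective circle g" using f_d[OF assms(2)] by blast
    then show "irreducible_map circle g" using dc ce by blast
  qed
  show ?thesis using ae ed db ba dc ce gr by blast
qed

end
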